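(* Let $(A,\cdot,\alpha)$ be a Hom-Malcev algebra over a field $\mathbb{K}$ of characteristic $0$, and define for $w,x,y,z\in A$ $$G(w,x,y,z)=J_{\alpha}(w\cdot x,\alpha(y),\alpha(z))-\alpha^{2}(x)\cdot J_{\alpha}(w,y,z)-J_{\alpha}(x,y,z)\cdot\alpha^{2}(w).$$ Then for all $w,x,y,z\in A$, $$G(w,x,y,z)=2\big[J_{\alpha}(w\cdot x,\alpha(y),\alpha(z))+J_{\alpha}(y\cdot z,\alpha(w),\alpha(x))\big].$$
   Context: A multiplicative Hom-algebra is a triple $(A,\cdot,\alpha)$ with $A$ a vector space over $\mathbb{K}$, $\cdot$ bilinear, and $\alpha$ linear with $\alpha(x\cdot y)=\alpha(x)\cdot\alpha(y)$; anticommutative means $x\cdot y=-y\cdot x$. The Hom-Jacobian is $J_{\alpha}(x,y,z)=(x\cdot y)\cdot\alpha(z)+(y\cdot z)\cdot\alpha(x)+(z\cdot x)\cdot\alpha(y)$. A Hom-Malcev algebra is an anticommutative multiplicative Hom-algebra satisfying $J_{\alpha}(\alpha(x),\alpha(y),x\cdot z)=J_{\alpha}(x,y,z)\cdot\alpha^{2}(x)$ for all $x,y,z\in A$. *)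

theory Defs
  imports Complex_Main
begin

definition hom_jacobian :: "('a \<Rightarrow> 'a \<Rightarrow> 'a::ab_group_add) \<Rightarrow> ('a \<Rightarrow> 'a) \<Rightarrow> 'a \<Rightarrow> 'a \<Rightarrow> 'a \<Rightarrow> 'a" where
  "hom_jacobian mult \<alpha> x y z =
     mult (mult x y) (\<alpha> z) + mult (mult y z) (\<alpha> x) + mult (mult z x) (\<alpha> y)"

definition hom_malcev ::
  "('k::field \<Rightarrow> 'a \<Rightarrow> 'a::ab_group_add) \<Rightarrow> ('a \<Rightarrow> 'a \<Rightarrow> 'a) \<Rightarrow> ('a \<Rightarrow> 'a) \<Rightarrow> bool" where
  "hom_malcev scale mult \<alpha> \<longleftrightarrow>
     vector_space scale \<and>
     (\<forall>y. module_hom scale scale (\<lambda>x. mult x y)) \<and>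
     (\<forall>x. module_hom scale scale (\<lambda>y. mult x y)) \<and>
     module_hom scale scale \<alpha> \<and>
     (\<forall>x y. \<alpha> (mult x y) = mult (\<alpha> x) (\<alpha> y)) \<and>
     (\<forall>x y. mult x y = - mult y x) \<and>
     (\<forall>x y z. hom_jacobian mult \<alpha> (\<alpha> x) (\<alpha> y) (mult x z)
                = mult (hom_jacobian mult \<alpha> x y z) (\<alpha> (\<alpha> x)))"

end

theory Submission
  imports Defs
begin

theorem lemma2p7:
  fixes scale :: "'k::field_char_0 \<Rightarrow> 'a::ab_group_add \<Rightarrow> 'a"
    and mult :: "'a \<Rightarrow> 'a \<Rightarrow> 'a" and \<alpha> :: "'a \<Rightarrow> 'a"
  assumes "hom_malcev scale mult \<alpha>"
  shows "\<forall>w x y z.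
    hom_jacobian mult \<alpha> (mult w x) (\<alpha> y) (\<alpha> z)
      - mult (\<alpha> (\<alpha> x)) (hom_jacobian mult \<alpha> w y z)
      - mult (hom_jacobian mult \<alpha> x y z) (\<alpha> (\<alpha> w))
    = scale 2 (hom_jacobian mult \<alpha> (mult w x) (\<alpha> y) (\<alpha> z)
               + hom_jacobian mult \<alpha> (mult y z) (\<alpha> w) (\<alpha> x))"
proof (intro allI)
  fix w x y z
  note H = assms[unfolded hom_malcev_def]
  have h1: "module_hom scale scale (\<lambda>x. mult x c)" for c using H by blast
  have h2: "module_hom scale scale (\<lambda>y. mult c y)" for c using H by blast
  have h3: "module_hom scale scale \<alpha>" using H by blast
  have MOD: "module scale" using h3 module_hom_iff by blast
  have madd1: "mult (a+b) c = mult a c + mult b c" for a b c using module_hom.add[OF h1] .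
  have madd2: "mult c (a+b) = mult c a + mult c b" for a b c using module_hom.add[OF h2] .
  have mneg1: "mult (-a) c = - mult a c" for a c using module_hom.neg[OF h1] .
  have mneg2: "mult c (-a) = - mult c a" for a c using module_hom.neg[OF h2] .
  have mdiff1: "mult (a-b) c = mult a c - mult b c" for a b c using module_hom.diff[OF h1] .
  have mdiff2: "mult c (a-b) = mult c a - mult c b" for a b c using module_hom.diff[OF h2] .
  have aadd: "\<alpha> (a+b) = \<alpha> a + \<alpha> b" for a b using module_hom.add[OF h3] .
  have aneg: "\<alpha> (-a) = - \<alpha> a" for a using module_hom.neg[OF h3] .
  have adiff: "\<alpha> (a-b) = \<alpha> a - \<alpha> b" for a b using module_hom.diff[OF h3] .
  have amul: "\<alpha> (mult a b) = mult (\<alpha> a) (\<alpha> b)" for a b using H by blast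
  have anti: "mult a b = - mult b a" for a b using H by blast
  have mal: "hom_jacobian mult \<alpha> (\<alpha> a) (\<alpha> b) (mult a c)
                = mult (hom_jacobian mult \<alpha> a b c) (\<alpha> (\<alpha> a))" for a b c using H by blast
  note EXP = hom_jacobian_def madd1 madd2 mneg1 mneg2 mdiff1 mdiff2 aadd aneg adiff amul
  have lin: "hom_jacobian mult \<alpha> (\<alpha> a) (\<alpha> b) (mult d c) + hom_jacobian mult \<alpha> (\<alpha> d) (\<alpha> b) (mult a c)
     = mult (hom_jacobian mult \<alpha> d b c) (\<alpha> (\<alpha> a)) + mult (hom_jacobian mult \<alpha> a b c) (\<alpha> (\<alpha> d))" for a d b c
  proof -
    have "(hom_jacobian mult \<alpha> (\<alpha> a) (\<alpha> b) (mult d c) + hom_jacobian mult \<alpha> (\<alpha> d) (\<alpha> b) (mult a c))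
     - (mult (hom_jacobian mult \<alpha> d b c) (\<alpha> (\<alpha> a)) + mult (hom_jacobian mult \<alpha> a b c) (\<alpha> (\<alpha> d)))
     = (hom_jacobian mult \<alpha> (\<alpha> (a+d)) (\<alpha> b) (mult (a+d) c) - mult (hom_jacobian mult \<alpha> (a+d) b c) (\<alpha> (\<alpha> (a+d))))
     - (hom_jacobian mult \<alpha> (\<alpha> a) (\<alpha> b) (mult a c) - mult (hom_jacobian mult \<alpha> a b c) (\<alpha> (\<alpha> a)))
     - (hom_jacobian mult \<alpha> (\<alpha> d) (\<alpha> b) (mult d c) - mult (hom_jacobian mult \<alpha> d b c) (\<alpha> (\<alpha> d)))"
      by (simp only: EXP) (simp add: algebra_simps)
    also have "\<dots> = 0" by (simp only: mal) simp
    finally show ?thesis by simp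
  qed
  have R: "mult (mult (\<alpha> (x)) (\<alpha> (y))) (mult (\<alpha> (w)) (\<alpha> (z))) = - mult (mult (\<alpha> (w)) (\<alpha> (z))) (mult (\<alpha> (x)) (\<alpha> (y)))"
    "mult (mult (\<alpha> (x)) (\<alpha> (z))) (mult (\<alpha> (w)) (\<alpha> (y))) = - mult (mult (\<alpha> (w)) (\<alpha> (y))) (mult (\<alpha> (x)) (\<alpha> (z)))"
    "mult (mult (\<alpha> (y)) (\<alpha> (z))) (mult (\<alpha> (w)) (\<alpha> (x))) = - mult (mult (\<alpha> (w)) (\<alpha> (x))) (mult (\<alpha> (y)) (\<alpha> (z)))"
    "mult (x) (w) = - mult (w) (x)"
    "mult (\<alpha> (x)) (mult (w) (y)) = - mult (mult (w) (y)) (\<alpha> (x))"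
    "mult (\<alpha> (x)) (mult (w) (z)) = - mult (mult (w) (z)) (\<alpha> (x))"
    "mult (\<alpha> (x)) (mult (y) (z)) = - mult (mult (y) (z)) (\<alpha> (x))"
    "mult (\<alpha> (\<alpha> (x))) (mult (mult (w) (y)) (\<alpha> (z))) = - mult (mult (mult (w) (y)) (\<alpha> (z))) (\<alpha> (\<alpha> (x)))"
    "mult (\<alpha> (\<alpha> (x))) (mult (mult (w) (z)) (\<alpha> (y))) = - mult (mult (mult (w) (z)) (\<alpha> (y))) (\<alpha> (\<alpha> (x)))"
    "mult (\<alpha> (\<alpha> (x))) (mult (mult (y) (z)) (\<alpha> (w))) = - mult (mult (mult (y) (z)) (\<alpha> (w))) (\<alpha> (\<alpha> (x)))"
    "mult (y) (w) = - mult (w) (y)"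
    "mult (y) (x) = - mult (x) (y)"
    "mult (\<alpha> (y)) (mult (w) (z)) = - mult (mult (w) (z)) (\<alpha> (y))"
    "mult (\<alpha> (y)) (mult (x) (z)) = - mult (mult (x) (z)) (\<alpha> (y))"
    "mult (\<alpha> (y)) (\<alpha> (x)) = - mult (\<alpha> (x)) (\<alpha> (y))"
    "mult (z) (w) = - mult (w) (z)"
    "mult (z) (x) = - mult (x) (z)"
    "mult (z) (y) = - mult (y) (z)"
    "mult (\<alpha> (z)) (mult (w) (x)) = - mult (mult (w) (x)) (\<alpha> (z))"
    "mult (\<alpha> (z)) (mult (x) (y)) = - mult (mult (x) (y)) (\<alpha> (z))"
    "mult (\<alpha> (z)) (\<alpha> (x)) = - mult (\<alpha> (x)) (\<alpha> (z))"
    "mult (\<alpha> (z)) (\<alpha> (y)) = - mult (\<alpha> (y)) (\<alpha> (z))"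
    by (rule anti)+
  have key: "hom_jacobian mult \<alpha> (mult w x) (\<alpha> y) (\<alpha> z)       - mult (\<alpha> (\<alpha> x)) (hom_jacobian mult \<alpha> (w) (y) (z))       - mult (hom_jacobian mult \<alpha> (x) (y) (z)) (\<alpha> (\<alpha> w))       - (hom_jacobian mult \<alpha> (mult w x) (\<alpha> y) (\<alpha> z) + hom_jacobian mult \<alpha> (mult y z) (\<alpha> w) (\<alpha> x)          + (hom_jacobian mult \<alpha> (mult w x) (\<alpha> y) (\<alpha> z) + hom_jacobian mult \<alpha> (mult y z) (\<alpha> w) (\<alpha> x))) + (hom_jacobian mult \<alpha> (mult w x) (\<alpha> y) (\<alpha> z)       - mult (\<alpha> (\<alpha> x)) (hom_jacobian mult \<alpha> (w) (y) (z))       - mult (hom_jacobian mult \<alpha> (x) (y) (z)) (\<alpha> (\<alpha> w))       - (hom_jacobian mult \<alpha> (mult w x) (\<alpha> y) (\<alpha> z) + hom_jacobian mult \<alpha> (mult y z) (\<alpha> w) (\<alpha> x)          + (hom_jacobian mult \<alpha> (mult w x) (\<alpha> y) (\<alpha> z) + hom_jacobian mult \<alpha> (mult y z) (\<alpha> w) (\<alpha> x)))) = ((hom_jacobian mult \<alpha> (\<alpha> w) (\<alpha> x) (mult z y) + hom_jacobian mult \<alpha> (\<alpha> z) (\<alpha> x) (mult w y)) - (mult (hom_jacobian mult \<alpha> (z) (x) (y)) (\<alpha> (\<alpha> w)) + mult (hom_jacobian mult \<alpha> (w) (x) (y)) (\<alpha> (\<alpha> z)))) - ((hom_jacobian mult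 \<alpha> (\<alpha> w) (\<alpha> z) (mult y x) + hom_jacobian mult \<alpha> (\<alpha> y) (\<alpha> z) (mult w x)) - (mult (hom_jacobian mult \<alpha> (y) (z) (x)) (\<alpha> (\<alpha> w)) + mult (hom_jacobian mult \<alpha> (w) (z) (x)) (\<alpha> (\<alpha> y)))) - ((hom_jacobian mult \<alpha> (\<alpha> w) (\<alpha> x) (mult y z) + hom_jacobian mult \<alpha> (\<alpha> y) (\<alpha> x) (mult w z)) - (mult (hom_jacobian mult \<alpha> (y) (x) (z)) (\<alpha> (\<alpha> w)) + mult (hom_jacobian mult \<alpha> (w) (x) (z)) (\<alpha> (\<alpha> y)))) - ((hom_jacobian mult \<alpha> (\<alpha> w) (\<alpha> x) (mult y z) + hom_jacobian mult \<alpha> (\<alpha> y) (\<alpha> x) (mult w z)) - (mult (hom_jacobian mult \<alpha> (y) (x) (z)) (\<alpha> (\<alpha> w)) + mult (hom_jacobian mult \<alpha> (w) (x) (z)) (\<alpha> (\<alpha> y)))) - ((hom_jacobian mult \<alpha> (\<alpha> w) (\<alpha> y) (mult x z) + hom_jacobian mult \<alpha> (\<alpha> x) (\<alpha> y) (mult w z)) - (mult (hom_jacobian mult \<alpha> (x) (y) (z)) (\<alpha> (\<alpha> w)) + mult (hom_jacobian mult \<alpha> (w) (y) (z)) (\<alpha> (\<alpha> x))))"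
    apply (simp only: EXP)
    apply (simp only: R mneg1 mneg2 minus_minus)
    by (simp add: algebra_simps)
  also have "\<dots> = 0" by (simp only: lin) simp
  finally have t0: "hom_jacobian mult \<alpha> (mult w x) (\<alpha> y) (\<alpha> z)       - mult (\<alpha> (\<alpha> x)) (hom_jacobian mult \<alpha> (w) (y) (z))       - mult (hom_jacobian mult \<alpha> (x) (y) (z)) (\<alpha> (\<alpha> w))       - (hom_jacobian mult \<alpha> (mult w x) (\<alpha> y) (\<alpha> z) + hom_jacobian mult \<alpha> (mult y z) (\<alpha> w) (\<alpha> x)          + (hom_jacobian mult \<alpha> (mult w x) (\<alpha> y) (\<alpha> z) + hom_jacobian mult \<alpha> (mult y z) (\<alpha> w) (\<alpha> x))) = 0"
  proof -
    assume e: "hom_jacobian mult \<alpha> (mult w x) (\<alpha> y) (\<alpha> z)       - mult (\<alpha> (\<alpha> x)) (hom_jacobian mult \<alpha> (w) (y) (z))       - mult (hom_jacobian mult \<alpha> (x) (y) (z)) (\<alpha> (\<alpha> w))       - (hom_jacobian mult \<alpha> (mult w x) (\<alpha> y) (\<alpha> z) + hom_jacobian mult \<alpha> (mult y z) (\<alpha> w) (\<alpha> x)          + (hom_jacobian mult \<alpha> (mult w x) (\<alpha> y) (\<alpha> z) + hom_jacobian mult \<alpha> (mult y z) (\<alpha> w) (\<alpha> x))) + (hom_jacobian mult \<alpha> (mult w x) (\<alpha> y) (\<alpha> z)       - mult (\<alpha> (\<alpha> x)) (hom_jacobian mult \<alpha> (w) (y) (z))       - mult (hom_jacobian mult \<alpha>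 (x) (y) (z)) (\<alpha> (\<alpha> w))       - (hom_jacobian mult \<alpha> (mult w x) (\<alpha> y) (\<alpha> z) + hom_jacobian mult \<alpha> (mult y z) (\<alpha> w) (\<alpha> x)          + (hom_jacobian mult \<alpha> (mult w x) (\<alpha> y) (\<alpha> z) + hom_jacobian mult \<alpha> (mult y z) (\<alpha> w) (\<alpha> x)))) = 0"
    have "hom_jacobian mult \<alpha> (mult w x) (\<alpha> y) (\<alpha> z)       - mult (\<alpha> (\<alpha> x)) (hom_jacobian mult \<alpha> (w) (y) (z))       - mult (hom_jacobian mult \<alpha> (x) (y) (z)) (\<alpha> (\<alpha> w))       - (hom_jacobian mult \<alpha> (mult w x) (\<alpha> y) (\<alpha> z) + hom_jacobian mult \<alpha> (mult y z) (\<alpha> w) (\<alpha> x)          + (hom_jacobian mult \<alpha> (mult w x) (\<alpha> y) (\<alpha> z) + hom_jacobian mult \<alpha> (mult y z) (\<alpha> w) (\<alpha> x))) = scale (1/2) (hom_jacobian mult \<alpha> (mult w x) (\<alpha> y) (\<alpha> z)       - mult (\<alpha> (\<alpha> x)) (hom_jacobian mult \<alpha> (w) (y) (z))       - mult (hom_jacobian mult \<alpha> (x) (y) (z)) (\<alpha> (\<alpha> w))       - (hom_jacobian mult \<alpha> (mult w x) (\<alpha> y) (\<alpha> z) + hom_jacobian mult \<alpha> (mult y z) (\<alpha> w) (\<alpha> x)          + (hom_jacobian mult \<alpha> (mult w x) (\<alpha> y) (\<alpha> z) + hom_jacobian mult \<alpha> (mult y z) (\<alpha> w) (\<alpha> x)))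 + (hom_jacobian mult \<alpha> (mult w x) (\<alpha> y) (\<alpha> z)       - mult (\<alpha> (\<alpha> x)) (hom_jacobian mult \<alpha> (w) (y) (z))       - mult (hom_jacobian mult \<alpha> (x) (y) (z)) (\<alpha> (\<alpha> w))       - (hom_jacobian mult \<alpha> (mult w x) (\<alpha> y) (\<alpha> z) + hom_jacobian mult \<alpha> (mult y z) (\<alpha> w) (\<alpha> x)          + (hom_jacobian mult \<alpha> (mult w x) (\<alpha> y) (\<alpha> z) + hom_jacobian mult \<alpha> (mult y z) (\<alpha> w) (\<alpha> x)))))"
      by (simp only: module.scale_right_distrib[OF MOD] module.scale_left_distrib[OF MOD, symmetric]) (simp add: module.scale_one[OF MOD])
    also have "\<dots> = 0" unfolding e using module.scale_zero_right[OF MOD] by simp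
    finally show ?thesis .
  qed
  have two: "scale 2 v = v + v" for v
    using module.scale_left_distrib[OF MOD, of 1 1 v] module.scale_one[OF MOD] by (simp add: one_add_one)
  show "hom_jacobian mult \<alpha> (mult w x) (\<alpha> y) (\<alpha> z)
      - mult (\<alpha> (\<alpha> x)) (hom_jacobian mult \<alpha> (w) (y) (z))
      - mult (hom_jacobian mult \<alpha> (x) (y) (z)) (\<alpha> (\<alpha> w)) = scale 2 (hom_jacobian mult \<alpha> (mult w x) (\<alpha> y) (\<alpha> z) + hom_jacobian mult \<alpha> (mult y z) (\<alpha> w) (\<alpha> x))" unfolding two using t0 right_minus_eq by blast
qed

end
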